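(* Let $E$ be a symmetric Banach function space on $[0,\alpha)$, $0<\alpha\le\infty$. If $E$ is strictly monotone then $E=E_0$.
   Context: $\mu(f)$ is the decreasing rearrangement of $f$, $\mu(\infty,f)=\lim_{t\to\infty}\mu(t,f)$, and $E_0=\{f\in E:\mu(\infty,f)=0\}$. $E$ is symmetric if $g\in E$, $\mu(f)\le\mu(g)$ imply $f\in E$ and $\|f\|_E\le\|g\|_E$. $E$ is strictly monotone if $0\le f\le g$, $f\ne g$ in $E$ imply $\|f\|_E<\|g\|_E$. *)

theory Defs
  imports "HOL-Analysis.Analysis"
begin

text \<open>The interval [0,alpha) with 0 < alpha \<le> \<infinity> and Lebesgue measure on it.
  Functions are real-valued, E is a set of such functions (identified a.e. via
  the ideal property), N is the norm of E.\<close>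

definition interval0 :: "ereal \<Rightarrow> real set" where
  "interval0 \<alpha> = {x. 0 \<le> x \<and> ereal x < \<alpha>}"

definition lebI :: "ereal \<Rightarrow> real measure" where
  "lebI \<alpha> = restrict_space lborel (interval0 \<alpha>)"

definition rearr :: "real measure \<Rightarrow> (real \<Rightarrow> real) \<Rightarrow> real \<Rightarrow> ennreal" where
  "rearr M f t = Inf {s::ennreal. emeasure M {x \<in> space M. s < ennreal \<bar>f x\<bar>} \<le> ennreal t}"

definition rearr_inf :: "real measure \<Rightarrow> (real \<Rightarrow> real) \<Rightarrow> ennreal" where
  "rearr_inf M f = Lim at_top (rearr M f)"

definition E0 :: "real measure \<Rightarrow> (real \<Rightarrow> real) set \<Rightarrow> (real \<Rightarrow> real) set" where
  "E0 M E = {f \<in> E. rearr_inf M f = 0}"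

definition banach_function_space ::
  "real measure \<Rightarrow> (real \<Rightarrow> real) set \<Rightarrow> ((real \<Rightarrow> real) \<Rightarrow> real) \<Rightarrow> bool" where
  "banach_function_space M E N \<longleftrightarrow>
     E \<subseteq> borel_measurable M \<and>
     (\<lambda>x. 0) \<in> E \<and>
     (\<forall>f\<in>E. \<forall>g\<in>E. (\<lambda>x. f x + g x) \<in> E) \<and>
     (\<forall>f\<in>E. \<forall>c. (\<lambda>x. c * f x) \<in> E) \<and>
     (\<forall>f\<in>E. 0 \<le> N f) \<and>
     (\<forall>f\<in>E. N f = 0 \<longleftrightarrow> (AE x in M. f x = 0)) \<and>
     (\<forall>f\<in>E. \<forall>c. N (\<lambda>x. c * f x) = \<bar>c\<bar> * N f) \<and>
     (\<forall>f\<in>E. \<forall>g\<in>E. N (\<lambda>x. f x + g x) \<le> N f + N g) \<and>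
     (\<forall>f g. g \<in> E \<longrightarrow> f \<in> borel_measurable M \<longrightarrow>
         (AE x in M. \<bar>f x\<bar> \<le> \<bar>g x\<bar>) \<longrightarrow> f \<in> E \<and> N f \<le> N g) \<and>
     (\<forall>u::nat \<Rightarrow> real \<Rightarrow> real. (\<forall>n. u n \<in> E) \<longrightarrow>
         (\<forall>e>0. \<exists>K. \<forall>m\<ge>K. \<forall>n\<ge>K. N (\<lambda>x. u m x - u n x) < e) \<longrightarrow>
         (\<exists>f\<in>E. (\<lambda>n. N (\<lambda>x. u n x - f x)) \<longlonglongrightarrow> 0))"

definition symmetric_space ::
  "real measure \<Rightarrow> (real \<Rightarrow> real) set \<Rightarrow> ((real \<Rightarrow> real) \<Rightarrow> real) \<Rightarrow> bool" where
  "symmetric_space M E N \<longleftrightarrow>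
     (\<forall>f g. g \<in> E \<longrightarrow> f \<in> borel_measurable M \<longrightarrow>
        (\<forall>t\<ge>0. rearr M f t \<le> rearr M g t) \<longrightarrow> f \<in> E \<and> N f \<le> N g)"

definition strictly_monotone ::
  "real measure \<Rightarrow> (real \<Rightarrow> real) set \<Rightarrow> ((real \<Rightarrow> real) \<Rightarrow> real) \<Rightarrow> bool" where
  "strictly_monotone M E N \<longleftrightarrow>
     (\<forall>f\<in>E. \<forall>g\<in>E. (AE x in M. 0 \<le> f x \<and> f x \<le> g x) \<longrightarrow>
        \<not> (AE x in M. f x = g x) \<longrightarrow> N f < N g)"

end

theory Submission
  imports Defs
begin

lemma rearr_mono:
  assumes "t \<le> t'"
  shows "rearr M f t' \<le> rearr M f t"
  unfolding rearr_def
proof (rule Inf_superset_mono, rule subsetI)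
  fix s assume "s \<in> {s. emeasure M {x \<in> space M. s < ennreal \<bar>f x\<bar>} \<le> ennreal t}"
  hence "emeasure M {x \<in> space M. s < ennreal \<bar>f x\<bar>} \<le> ennreal t" by simp
  also have "ennreal t \<le> ennreal t'" using assms by (rule ennreal_leI)
  finally show "s \<in> {s. emeasure M {x \<in> space M. s < ennreal \<bar>f x\<bar>} \<le> ennreal t'}" by simp
qed

lemma space_lebI: "space (lebI \<alpha>) = interval0 \<alpha>"
  by (simp add: lebI_def space_restrict_space)

lemma sets_interval0: "interval0 \<alpha> \<in> sets lborel"
  unfolding interval0_def by measurable

lemma emeasure_lebI:
  assumes "A \<subseteq> interval0 \<alpha>"
  shows "emeasure (lebI \<alpha>) A = emeasure lborel A"
  unfolding lebI_def using assms sets_interval0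
  by (intro emeasure_restrict_space) auto

lemma finite_case:
  assumes "\<alpha> = ereal a"
  shows "rearr_inf (lebI \<alpha>) f = 0"
proof -
  have ev: "eventually (\<lambda>t. rearr (lebI \<alpha>) f t = 0) at_top"
  proof (rule eventually_at_top_linorderI[of "max a 0"])
    fix t assume t: "t \<ge> max a 0"
    let ?M = "lebI \<alpha>"
    have "emeasure ?M {x \<in> space ?M. 0 < ennreal \<bar>f x\<bar>} \<le> emeasure ?M (space ?M)"
      by (rule emeasure_mono) auto
    also have "\<dots> = emeasure lborel (interval0 \<alpha>)"
      by (simp add: space_lebI emeasure_lebI)
    also have "\<dots> \<le> emeasure lborel {0..max a 0}"
      by (rule emeasure_mono) (auto simp: interval0_def assms)
    also have "\<dots> = ennreal (max a 0)" by simp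
    also have "\<dots> \<le> ennreal t" using t by (simp add: ennreal_leI)
    finally have "0 \<in> {s::ennreal. emeasure ?M {x \<in> space ?M. s < ennreal \<bar>f x\<bar>} \<le> ennreal t}"
      by simp
    hence "rearr ?M f t \<le> 0" unfolding rearr_def by (rule Inf_lower)
    thus "rearr ?M f t = 0" by simp
  qed
  have "(rearr (lebI \<alpha>) f \<longlongrightarrow> 0) at_top"
    by (rule tendsto_eventually) (use ev in \<open>simp\<close>)
  thus ?thesis unfolding rearr_inf_def by (rule tendsto_Lim[rotated]) simp
qed

lemma l1: "0 < (L::ennreal) \<Longrightarrow> \<exists>d>0. ennreal d < L"
proof -
  assume "0 < L"
  then obtain r where r: "0 < r" "r < L" using dense by blast
  hence "r \<noteq> top" using less_le_trans[OF r(2) top_greatest] by simp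
  then obtain d where d: "r = ennreal d" "0 \<le> d" by (cases r) auto
  thus ?thesis using r by auto
qed

lemma l2:
  fixes g :: "real \<Rightarrow> ennreal"
  assumes mono: "\<And>t t'. t \<le> t' \<Longrightarrow> g t' \<le> g t"
  shows "(g \<longlongrightarrow> (INF t\<in>{0::real..}. g t)) at_top"
proof (rule decreasing_tendsto)
  show "\<forall>\<^sub>F n in at_top. (INF t\<in>{0::real..}. g t) \<le> g n"
    using eventually_ge_at_top[of "0::real"]
    by eventually_elim (rule INF_lower, simp)
  fix x assume "(INF t\<in>{0::real..}. g t) < x"
  hence "\<exists>t0\<in>{0..}. g t0 < x" by (simp only: INF_less_iff)
  then obtain t0 where t0: "t0 \<in> {0..}" "g t0 < x" by blast
  show "\<forall>\<^sub>F n in at_top. g n < x"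
    using eventually_ge_at_top[of t0]
    by eventually_elim (rule le_less_trans[OF mono t0(2)])
qed

lemma inf_case:
  assumes "rearr_inf M f \<noteq> 0"
  shows "\<exists>d>0. \<forall>t\<ge>0. ennreal d \<le> rearr M f t"
proof -
  define L where "L = (INF t\<in>{0::real..}. rearr M f t)"
  have "(rearr M f \<longlongrightarrow> L) at_top"
    unfolding L_def by (rule l2[of "rearr M f", OF rearr_mono])
  hence "rearr_inf M f = L" unfolding rearr_inf_def by (intro tendsto_Lim trivial_limit_at_top_linorder)
  with assms have "0 < L" by (simp add: zero_less_iff_neq_zero)
  then obtain d where d: "d > 0" "ennreal d < L" using l1 by blast
  have "ennreal d \<le> rearr M f t" if "t \<ge> 0" for t
  proof -
    have "L \<le> rearr M f t" unfolding L_def using that by (intro INF_lower) auto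
    thus ?thesis using d by simp
  qed
  with d show ?thesis by blast
qed

lemma measure_big:
  assumes "{1..} \<subseteq> A" "A \<subseteq> interval0 \<infinity>" "A \<in> sets lborel" "t \<ge> 0"
  shows "\<not> emeasure (lebI \<infinity>) A \<le> ennreal t"
proof
  assume a: "emeasure (lebI \<infinity>) A \<le> ennreal t"
  have "ennreal (t + 1) = emeasure lborel {1..t+2}" using assms(4) by simp
  also have "\<dots> \<le> emeasure lborel A" using assms(1,3) by (intro emeasure_mono) auto
  also have "\<dots> = emeasure (lebI \<infinity>) A" using assms(2) by (simp add: emeasure_lebI)
  finally have "ennreal (t+1) \<le> ennreal t" using a by (rule order_trans)
  thus False using assms(4) by (simp add: ennreal_le_iff)
qed

lemma interval0_inf: "interval0 \<infinity> = {0..}"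
  by (auto simp: interval0_def)

theorem mainTheorem12:
  fixes \<alpha> :: ereal and E :: "(real \<Rightarrow> real) set" and N :: "(real \<Rightarrow> real) \<Rightarrow> real"
  assumes "0 < \<alpha>"
    and "banach_function_space (lebI \<alpha>) E N"
    and "symmetric_space (lebI \<alpha>) E N"
    and "strictly_monotone (lebI \<alpha>) E N"
  shows "E = E0 (lebI \<alpha>) E"
proof (rule ccontr)
  assume "E \<noteq> E0 (lebI \<alpha>) E"
  then obtain f where fE: "f \<in> E" and nz: "rearr_inf (lebI \<alpha>) f \<noteq> 0"
    unfolding E0_def by auto
  have ainf: "\<alpha> = \<infinity>"
  proof (cases \<alpha>)
    case (real r) thus ?thesis using finite_case[OF real] nz by simp
  next
    case MInf thus ?thesis using assms(1) by simp
  qed simp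
  define M where "M = lebI \<alpha>"
  have spM: "space M = {0..}" unfolding M_def space_lebI ainf interval0_inf ..
  from inf_case[OF nz] obtain d :: real where d: "d > 0" "\<And>t. t \<ge> 0 \<Longrightarrow> ennreal d \<le> rearr M f t"
    unfolding M_def by blast
  define g where "g = (\<lambda>x::real. d)"
  define h where "h = (\<lambda>x::real. if 1 \<le> x then d else 0)"
  have gm: "g \<in> borel_measurable M" unfolding g_def by simp
  have hm: "h \<in> borel_measurable M" unfolding h_def M_def lebI_def
    by (intro measurable_restrict_space1) measurable
  have setg: "{x \<in> space M. s < ennreal \<bar>g x\<bar>} = (if s < ennreal d then {0..} else {})" for s
    using d by (auto simp: g_def spM)
  have seth: "{x \<in> space M. s < ennreal \<bar>h x\<bar>} = (if s < ennreal d then {1..} else {})" for s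
    using d by (auto simp: h_def spM)
  have eqset: "(emeasure M {x \<in> space M. s < ennreal \<bar>g x\<bar>} \<le> ennreal t) =
      (emeasure M {x \<in> space M. s < ennreal \<bar>h x\<bar>} \<le> ennreal t)" if "t \<ge> 0" for s t
  proof (cases "s < ennreal d")
    case True
    have "\<not> emeasure M {0..} \<le> ennreal t" unfolding M_def ainf
      using that by (intro measure_big) (auto simp: interval0_inf)
    moreover have "\<not> emeasure M {1..} \<le> ennreal t" unfolding M_def ainf
      using that by (intro measure_big) (auto simp: interval0_inf)
    ultimately show ?thesis using True by (simp add: setg seth)
  next
    case False thus ?thesis by (simp add: setg seth)
  qed
  have rgh: "rearr M g t = rearr M h t" if "t \<ge> 0" for t
    unfolding rearr_def using eqset[OF that] by simp
  have rg: "rearr M g t \<le> ennreal d" if "t \<ge> 0" for t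
  proof -
    have "ennreal d \<in> {s. emeasure M {x \<in> space M. s < ennreal \<bar>g x\<bar>} \<le> ennreal t}"
      by (simp add: setg)
    thus ?thesis unfolding rearr_def by (rule Inf_lower)
  qed
  have sym: "symmetric_space M E N" using assms(3) unfolding M_def .
  have gE: "g \<in> E" and "N g \<le> N f"
    using sym[unfolded symmetric_space_def, rule_format, OF fE gm] rg d(2) order_trans by blast+
  have hE: "h \<in> E" and Ngh: "N g \<le> N h"
  proof -
    have "h \<in> E \<and> N h \<le> N g"
      using sym[unfolded symmetric_space_def, rule_format, OF gE hm] rgh by simp
    moreover have "g \<in> E \<and> N g \<le> N h" if "h \<in> E"
      using sym[unfolded symmetric_space_def, rule_format, OF that gm] rgh by simp
    ultimately show "h \<in> E" "N g \<le> N h" by auto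
  qed
  have ae1: "AE x in M. 0 \<le> h x \<and> h x \<le> g x"
    using d by (intro AE_I2) (simp add: h_def g_def)
  have ae2: "\<not> (AE x in M. h x = g x)"
  proof
    assume "AE x in M. h x = g x"
    moreover have "{x \<in> space M. \<not> h x = g x} = {0..<1}"
      using d by (auto simp: spM h_def g_def)
    moreover have "{0..<1::real} \<in> sets M" unfolding M_def lebI_def ainf
      by (auto simp: sets_restrict_space_iff interval0_inf)
    ultimately have "emeasure M {0..<1::real} = 0"
      using AE_iff_measurable by metis
    moreover have "emeasure M {0..<1::real} = 1" unfolding M_def ainf
      by (subst emeasure_lebI) (auto simp: interval0_inf)
    ultimately show False by simp
  qed
  have "N h < N g" using assms(4)[unfolded strictly_monotone_def M_def[symmetric]] hE gE ae1 ae2 by blast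
  with Ngh show False by simp
qed

end
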